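(* Let $\mathcal{N}$ be a von Neumann algebra, $n\geqslant 2$ an integer, and $\mathcal{M}=M_n(\mathbb{C})\otimes\mathcal{N}$. If $\mathcal{N}$ contains an operator that is irreducible in $\mathcal{N}$, then there exist a projection $P\in\mathcal{M}$ and a self-adjoint operator $B\in\mathcal{M}$ such that $P+iB$ is irreducible in $\mathcal{M}$.
   Context: For a von Neumann algebra $\mathcal{M}$ with center $\mathcal{Z}(\mathcal{M})$, an operator $T\in\mathcal{M}$ is called irreducible (in $\mathcal{M}$) if $W^*(T)'\cap\mathcal{M}=\mathcal{Z}(\mathcal{M})$, where $W^*(T)$ is the von Neumann algebra generated by $T$. *)

theory Defs
  imports "HOL-Analysis.Analysis"
begin

text \<open>A complex Hilbert space is modelled as a real Hilbert space (real inner product,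
complete) equipped with a compatible complex scalar multiplication; the complex inner
product is then recovered as cinner below (linear in the second argument).\<close>

class chilbert = real_inner + complete_space +
  fixes cscale :: "complex \<Rightarrow> 'a \<Rightarrow> 'a"
  assumes cscale_of_real: "cscale (complex_of_real r) x = scaleR r x"
    and cscale_add_left: "cscale (a + b) x = cscale a x + cscale b x"
    and cscale_add_right: "cscale a (x + y) = cscale a x + cscale a y"
    and cscale_mult: "cscale (a * b) x = cscale a (cscale b x)"
    and inner_cscale_ii: "inner (cscale \<i> x) (cscale \<i> y) = inner x y"

definition cinner :: "'a::chilbert \<Rightarrow> 'a \<Rightarrow> complex" where
  "cinner x y = Complex (inner x y) (inner (cscale \<i> x) y)"

text \<open>Direct sum of finitely many copies of a complex Hilbert space, H^n = C^n \<otimes> H.\<close>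

instantiation vec :: (chilbert, finite) chilbert
begin
definition cscale_vec :: "complex \<Rightarrow> 'a ^ 'b \<Rightarrow> 'a ^ 'b" where
  "cscale_vec c x = (\<chi> i. cscale c (x $ i))"
instance
  by standard (simp_all add: cscale_vec_def vec_eq_iff scaleR_vec_def inner_vec_def
      cscale_of_real cscale_add_left cscale_add_right cscale_mult inner_cscale_ii)
end

definition cblinear :: "('a::chilbert \<Rightarrow> 'a) \<Rightarrow> bool" where
  "cblinear A \<longleftrightarrow> bounded_linear A \<and> (\<forall>c x. A (cscale c x) = cscale c (A x))"

definition adj :: "('a::chilbert \<Rightarrow> 'a) \<Rightarrow> ('a \<Rightarrow> 'a)" where
  "adj A = (SOME B. cblinear B \<and> (\<forall>x y. cinner (A x) y = cinner x (B y)))"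

definition commutant :: "('a::chilbert \<Rightarrow> 'a) set \<Rightarrow> ('a \<Rightarrow> 'a) set" where
  "commutant S = {B. cblinear B \<and> (\<forall>A\<in>S. A \<circ> B = B \<circ> A)}"

text \<open>Von Neumann algebra: a self-adjoint set of bounded operators equal to its double
commutant (equivalently, by the bicommutant theorem, a weak-operator closed unital
*-subalgebra of B(H)).\<close>

definition von_neumann_algebra :: "('a::chilbert \<Rightarrow> 'a) set \<Rightarrow> bool" where
  "von_neumann_algebra M \<longleftrightarrow>
     (\<forall>A\<in>M. cblinear A) \<and> (\<forall>A\<in>M. adj A \<in> M) \<and> commutant (commutant M) = M"

definition center :: "('a::chilbert \<Rightarrow> 'a) set \<Rightarrow> ('a \<Rightarrow> 'a) set" where
  "center M = M \<inter> commutant M"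

definition Wstar :: "('a::chilbert \<Rightarrow> 'a) \<Rightarrow> ('a \<Rightarrow> 'a) set" where
  "Wstar T = commutant (commutant {T, adj T})"

definition irreducible_in :: "('a::chilbert \<Rightarrow> 'a) set \<Rightarrow> ('a \<Rightarrow> 'a) \<Rightarrow> bool" where
  "irreducible_in M T \<longleftrightarrow> T \<in> M \<and> commutant (Wstar T) \<inter> M = center M"

definition is_projection :: "('a::chilbert \<Rightarrow> 'a) \<Rightarrow> bool" where
  "is_projection P \<longleftrightarrow> cblinear P \<and> P \<circ> P = P \<and> adj P = P"

definition self_adjoint :: "('a::chilbert \<Rightarrow> 'a) \<Rightarrow> bool" where
  "self_adjoint B \<longleftrightarrow> cblinear B \<and> adj B = B"

section \<open>M_n(C) \<otimes> N, realised as n \<times> n operator matrices with entries in N acting on H^n\<close>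

definition op_matrix :: "('n::finite \<Rightarrow> 'n \<Rightarrow> ('a::chilbert \<Rightarrow> 'a)) \<Rightarrow> ('a ^ 'n \<Rightarrow> 'a ^ 'n)" where
  "op_matrix A x = (\<chi> i. \<Sum>j\<in>UNIV. A i j (x $ j))"

definition matrix_tensor :: "('a::chilbert \<Rightarrow> 'a) set \<Rightarrow> ('a ^ 'n::finite \<Rightarrow> 'a ^ 'n) set" where
  "matrix_tensor N = {op_matrix A | A. \<forall>i j. A i j \<in> N}"

end

theory Submission
  imports Defs
begin

lemma cscale_decomp: "cscale c (x::'a::chilbert) = Re c *\<^sub>R x + Im c *\<^sub>R cscale \<i> x"
proof -
  have "c = complex_of_real (Re c) + complex_of_real (Im c) * \<i>"
    by (simp add: complex_eq_iff)
  then have "cscale c x = cscale (complex_of_real (Re c) + complex_of_real (Im c) * \<i>) x" by simp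
  also have "\<dots> = Re c *\<^sub>R x + Im c *\<^sub>R cscale \<i> x"
    by (simp add: cscale_add_left cscale_mult cscale_of_real)
  finally show ?thesis .
qed

lemma cscale_ii_ii: "cscale \<i> (cscale \<i> (x::'a::chilbert)) = - x"
proof -
  have "cscale \<i> (cscale \<i> x) = cscale (complex_of_real (-1)) x"
    by (simp flip: cscale_mult)
  then show ?thesis by (metis cscale_of_real of_real_minus of_real_1 scaleR_minus1_left)
qed

lemma cscale_scaleR: "cscale c (r *\<^sub>R (x::'a::chilbert)) = r *\<^sub>R cscale c x"
  by (metis cscale_mult cscale_of_real mult.commute)

lemma cscale_zero[simp]: "cscale c (0::'a::chilbert) = 0"
  by (metis cscale_scaleR scale_zero_left)

lemma cscale_0[simp]: "cscale 0 (x::'a::chilbert) = 0"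
  by (metis cscale_of_real of_real_0 scale_zero_left)

lemma cscale_1[simp]: "cscale 1 (x::'a::chilbert) = x"
  by (metis cscale_of_real of_real_1 scale_one)

lemma cscale_minus: "cscale c (- (x::'a::chilbert)) = - cscale c x"
  by (metis cscale_scaleR scaleR_minus1_left)

lemma cscale_diff: "cscale c ((x::'a::chilbert) - y) = cscale c x - cscale c y"
  by (metis cscale_add_right cscale_minus diff_conv_add_uminus)

lemma cscale_comm: "cscale c (cscale d (x::'a::chilbert)) = cscale d (cscale c x)"
  by (metis cscale_mult mult.commute)

lemma inner_ii_left: "inner (cscale \<i> x) (y::'a::chilbert) = - inner x (cscale \<i> y)"
proof -
  have "inner (cscale \<i> x) y = inner (cscale \<i> (cscale \<i> x)) (cscale \<i> y)"
    by (simp add: inner_cscale_ii)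
  then show ?thesis by (simp add: cscale_ii_ii)
qed

lemma norm_ii: "norm (cscale \<i> (x::'a::chilbert)) = norm x"
  by (simp add: norm_eq_sqrt_inner inner_cscale_ii)

lemma bounded_linear_cscale: "bounded_linear (cscale c :: 'a::chilbert \<Rightarrow> 'a)"
proof
  fix x y :: 'a and r :: real
  show "cscale c (x + y) = cscale c x + cscale c y" by (rule cscale_add_right)
  show "cscale c (r *\<^sub>R x) = r *\<^sub>R cscale c x" by (rule cscale_scaleR)
  show "\<exists>K. \<forall>x::'a. norm (cscale c x) \<le> norm x * K"
  proof (intro exI allI)
    fix x :: 'a
    have "norm (cscale c x) \<le> norm (Re c *\<^sub>R x) + norm (Im c *\<^sub>R cscale \<i> x)"
      by (simp only: cscale_decomp[of c x] norm_triangle_ineq)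
    also have "\<dots> = norm x * (\<bar>Re c\<bar> + \<bar>Im c\<bar>)"
      by (simp add: norm_ii algebra_simps)
    finally show "norm (cscale c x) \<le> norm x * (\<bar>Re c\<bar> + \<bar>Im c\<bar>)" .
  qed
qed

lemma cscale_sum: "cscale c (sum f A) = (\<Sum>x\<in>A. cscale c (f x :: 'a::chilbert))"
  using linear_sum[OF bounded_linear.linear[OF bounded_linear_cscale]] by (metis comp_def)

lemma inner_ii_right: "inner x (cscale \<i> (y::'a::chilbert)) = - inner (cscale \<i> x) y"
  by (simp add: inner_ii_left)

lemma inner_cscale_right: "inner u (cscale c (v::'a::chilbert)) = inner (cscale (cnj c) u) v"
  apply (simp only: cscale_decomp[of c v] cscale_decomp[of "cnj c" u])
  by (simp add: inner_add_right inner_add_left inner_ii_right inner_diff_left)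

lemma cinner_Re: "Re (cinner x y) = inner x y" by (simp add: cinner_def)
lemma cinner_Im: "Im (cinner x y) = inner (cscale \<i> x) y" by (simp add: cinner_def)

lemma cinner_add_left: "cinner (x + y) (z::'a::chilbert) = cinner x z + cinner y z"
  by (simp add: complex_eq_iff cinner_def cscale_add_right inner_add_left)
lemma cinner_add_right: "cinner z (x + (y::'a::chilbert)) = cinner z x + cinner z y"
  by (simp add: complex_eq_iff cinner_def inner_add_right)
lemma cinner_minus_left: "cinner (- x) (z::'a::chilbert) = - cinner x z"
  by (simp add: complex_eq_iff cinner_def cscale_minus)
lemma cinner_minus_right: "cinner z (- (x::'a::chilbert)) = - cinner z x"
  by (simp add: complex_eq_iff cinner_def)
lemma cinner_diff_left: "cinner (x - y) (z::'a::chilbert) = cinner x z - cinner y z"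
  by (metis cinner_add_left cinner_minus_left diff_conv_add_uminus)
lemma cinner_diff_right: "cinner z (x - (y::'a::chilbert)) = cinner z x - cinner z y"
  by (metis cinner_add_right cinner_minus_right diff_conv_add_uminus)

lemma cinner_scale_right: "cinner x (cscale c (y::'a::chilbert)) = c * cinner x y"
  apply (simp only: cinner_def cscale_decomp[of c y])
  by (simp add: complex_eq_iff inner_add_right inner_cscale_ii inner_ii_right cscale_ii_ii)

lemma cinner_scale_left: "cinner (cscale c x) (y::'a::chilbert) = cnj c * cinner x y"
  apply (simp only: cinner_def cscale_decomp[of c x])
  by (simp add: complex_eq_iff inner_add_left cscale_add_right cscale_scaleR cscale_ii_ii inner_diff_left)

lemma cinner_commute: "cinner y (x::'a::chilbert) = cnj (cinner x y)"
proof -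
  have h0: "inner y (cscale \<i> x) = inner (cscale \<i> x) y" by (rule inner_commute)
  have h1: "inner (cscale \<i> y) x = - inner (cscale \<i> x) y"
    unfolding inner_ii_left[of y x] h0 by (rule refl)
  have h2: "inner y x = inner x y" by (rule inner_commute)
  show ?thesis unfolding cinner_def complex_cnj h1 h2 by (rule refl)
qed

lemma cinner_sum_left: "cinner (sum f A) (y::'a::chilbert) = (\<Sum>i\<in>A. cinner (f i) y)"
  by (simp only: complex_eq_iff cinner_Re cinner_Im Re_sum Im_sum cscale_sum inner_sum_left)
lemma cinner_sum_right: "cinner y (sum f A) = (\<Sum>i\<in>A. cinner (y::'a::chilbert) (f i))"
  by (simp only: complex_eq_iff cinner_Re cinner_Im Re_sum Im_sum inner_sum_right)

lemma cinner_vec: "cinner (x::'a::chilbert^'n) y = (\<Sum>i\<in>UNIV. cinner (x$i) (y$i))"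
  by (simp add: complex_eq_iff cinner_def inner_vec_def cscale_vec_def)

lemma riesz_aux_orth:
  fixes w k :: "'a::real_inner"
  assumes "\<And>t::real. norm w ^ 2 \<le> norm (w + t *\<^sub>R k) ^ 2"
  shows "inner w k = 0"
proof (rule ccontr)
  assume ne: "inner w k \<noteq> 0"
  define c where "c = inner w k"
  define q where "q = norm k ^ 2"
  have q0: "q \<ge> 0" unfolding q_def by simp
  define t where "t = - c / (q + 1)"
  have exp: "norm (w + t *\<^sub>R k) ^ 2 = norm w ^ 2 + 2 * t * c + t^2 * q"
    unfolding c_def q_def power2_norm_eq_inner
    by (simp add: inner_add_left inner_add_right inner_commute algebra_simps power2_eq_square)
  have qq: "q + 1 > 0" using q0 by simp
  have h0: "0 \<le> 2 * t * c + t^2 * q" using assms[of t] exp by simp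
  have ht: "t * (q+1) = -c" unfolding t_def using qq by simp
  have "(2 * t * c + t^2 * q) * (q+1)^2 = 2*c*(t*(q+1))*(q+1) + q*(t*(q+1))^2"
    by (simp add: power2_eq_square algebra_simps)
  also have "\<dots> = - (c^2 * (q+2))" unfolding ht by (simp add: power2_eq_square algebra_simps)
  finally have eq: "(2 * t * c + t^2 * q) * (q+1)^2 = - (c^2 * (q+2))" .
  moreover
  moreover have "c^2 * (q+2) > 0" using ne q0 unfolding c_def by simp
  moreover have "(q+1)^2 > 0" using qq by simp
  ultimately have "0 \<le> - (c^2 * (q+2))" using h0 by (metis mult_nonneg_nonneg less_imp_le)
  then show False using \<open>c^2 * (q+2) > 0\<close> by linarith
qed

lemma riesz:
  fixes f :: "'a::{real_inner,complete_space} \<Rightarrow> real"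
  assumes bl: "bounded_linear f"
  shows "\<exists>z. \<forall>x. f x = inner x z"
proof (cases "\<forall>x. f x = 0")
  case True then show ?thesis by (intro exI[of _ 0]) simp
next
  case False
  interpret f: bounded_linear f by (rule bl)
  obtain x0 where x0: "f x0 \<noteq> 0" using False by blast
  define K where "K = {x. f x = 1}"
  have eK: "x0 /\<^sub>R f x0 \<in> K" unfolding K_def using x0 by (simp add: f.scale)
  define d where "d = Inf (norm ` K)"
  have bdd: "bdd_below (norm ` K)" by (rule bdd_belowI[of _ 0]) auto
  have d_le: "d \<le> norm x" if "x \<in> K" for x
    unfolding d_def using bdd that by (simp add: cInf_lower)
  have d0: "d \<ge> 0" unfolding d_def using eK by (intro cInf_greatest) auto
  have ex: "\<exists>x\<in>K. norm x ^ 2 < d ^ 2 + 1 / (real n + 1)" for n :: nat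
  proof -
    have "d < sqrt (d^2 + 1 / (real n + 1))"
      by (rule real_less_rsqrt) simp
    then have "Inf (norm ` K) < sqrt (d^2 + 1 / (real n + 1))" unfolding d_def .
    then have "\<exists>y\<in>norm ` K. y < sqrt (d^2 + 1 / (real n + 1))"
      by (rule cInf_lessD[rotated]) (use eK in auto)
    then obtain y where "y \<in> norm ` K" "y < sqrt (d^2 + 1 / (real n + 1))" by blast
    then obtain x where x: "x \<in> K" "norm x < sqrt (d^2 + 1 / (real n + 1))" by auto
    have "norm x ^ 2 < (sqrt (d^2 + 1 / (real n + 1))) ^ 2"
      by (rule power_strict_mono) (use x in auto)
    then have "norm x ^ 2 < d^2 + 1 / (real n + 1)"
      by (simp add: add_nonneg_nonneg)
    with x show ?thesis by blast
  qed
  then obtain u where u: "\<And>n. u n \<in> K" "\<And>n. norm (u n) ^ 2 < d ^ 2 + 1 / (real n + 1)"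
    by metis
  have fu: "f (u n) = 1" for n using u(1) unfolding K_def by simp
  have diff_bound: "norm (u m - u n) ^ 2 \<le> 2 / (real m + 1) + 2 / (real n + 1)" for m n
  proof -
    have mid: "(1/2) *\<^sub>R (u m + u n) \<in> K" unfolding K_def
      using fu by (simp add: f.scale f.add)
    have "d \<le> norm ((1/2) *\<^sub>R (u m + u n))" by (rule d_le[OF mid])
    then have "d ^ 2 \<le> norm ((1/2) *\<^sub>R (u m + u n)) ^ 2" using d0 by (simp add: power_mono)
    then have h: "4 * d^2 \<le> norm (u m + u n) ^ 2" by (simp add: power2_eq_square)
    have par: "norm (u m - u n) ^ 2 = 2 * norm (u m) ^ 2 + 2 * norm (u n) ^ 2 - norm (u m + u n) ^ 2"
      unfolding power2_norm_eq_inner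
      by (simp add: inner_add_left inner_add_right inner_diff_left inner_diff_right inner_commute)
    show ?thesis using par h u(2)[of m] u(2)[of n] by linarith
  qed
  have cauchy: "Cauchy u"
  proof (rule metric_CauchyI)
    fix e :: real assume e: "e > 0"
    obtain N :: nat where N: "4 / e^2 < real N" using reals_Archimedean2 by blast
    have "\<forall>m\<ge>N. \<forall>n\<ge>N. dist (u m) (u n) < e"
    proof (intro allI impI)
      fix m n assume mn: "m \<ge> N" "n \<ge> N"
      have e2: "e^2 > 0" using e by simp
      have "2 / (real m + 1) < e^2 / 2"
      proof -
        have "4 / e^2 < real m + 1" using N mn by linarith
        then have "4 < e^2 * (real m + 1)" using e2 by (simp add: divide_less_eq mult.commute)
        then show ?thesis by (simp add: divide_less_eq field_simps)
      qed
      moreover have "2 / (real n + 1) < e^2 / 2"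
      proof -
        have "4 / e^2 < real n + 1" using N mn by linarith
        then have "4 < e^2 * (real n + 1)" using e2 by (simp add: divide_less_eq mult.commute)
        then show ?thesis by (simp add: divide_less_eq field_simps)
      qed
      ultimately have "norm (u m - u n) ^ 2 < e ^ 2" using diff_bound[of m n] by linarith
      then have "norm (u m - u n) < e" using e by (simp add: power_less_imp_less_base)
      then show "dist (u m) (u n) < e" by (simp add: dist_norm)
    qed
    then show "\<exists>M. \<forall>m\<ge>M. \<forall>n\<ge>M. dist (u m) (u n) < e" by blast
  qed
  then obtain w where lim: "u \<longlonglongrightarrow> w" using convergent_eq_Cauchy by blast
  have "(\<lambda>n. f (u n)) \<longlonglongrightarrow> f w" using f.tendsto[OF lim] .
  then have fw: "f w = 1" using fu by (simp add: LIMSEQ_const_iff)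
  have nw: "norm w ^ 2 \<le> d ^ 2"
  proof (rule LIMSEQ_le)
    show "(\<lambda>n. norm (u n) ^ 2) \<longlonglongrightarrow> norm w ^ 2"
      by (intro tendsto_intros lim)
    show "(\<lambda>n. d ^ 2 + 1 / (real n + 1)) \<longlonglongrightarrow> d ^ 2"
      using LIMSEQ_inverse_real_of_nat_add[of "d^2"]
      by (simp add: inverse_eq_divide add.commute)
    show "\<exists>N. \<forall>n\<ge>N. norm (u n) ^ 2 \<le> d ^ 2 + 1 / (real n + 1)"
      using u(2) less_imp_le by blast
  qed
  have orth: "inner w k = 0" if "f k = 0" for k
  proof (rule riesz_aux_orth)
    fix t :: real
    have "w + t *\<^sub>R k \<in> K" unfolding K_def using fw that by (simp add: f.add f.scale)
    then have "d \<le> norm (w + t *\<^sub>R k)" by (rule d_le)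
    then have "d^2 \<le> norm (w + t *\<^sub>R k) ^ 2" using d0 by (simp add: power_mono)
    then show "norm w ^ 2 \<le> norm (w + t *\<^sub>R k) ^ 2" using nw by linarith
  qed
  have w0: "w \<noteq> 0" using fw by auto
  then have nw0: "inner w w \<noteq> 0" by simp
  show ?thesis
  proof (intro exI allI)
    fix x
    have "f (x - f x *\<^sub>R w) = 0" using fw by (simp add: f.diff f.scale)
    then have "inner w (x - f x *\<^sub>R w) = 0" by (rule orth)
    then have "inner w x = f x * inner w w" by (simp add: inner_diff_right)
    then have "f x = inner x w / inner w w" using nw0 by (simp add: inner_commute)
    then show "f x = inner x ((1 / inner w w) *\<^sub>R w)" by simp
  qed
qed

definition has_adj :: "('a::chilbert \<Rightarrow> 'a) \<Rightarrow> ('a \<Rightarrow> 'a) \<Rightarrow> bool" where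
  "has_adj A B \<longleftrightarrow> cblinear B \<and> (\<forall>x y. cinner (A x) y = cinner x (B y))"

lemma inner_all_zero: "(\<And>x. inner x (d::'a::real_inner) = 0) \<Longrightarrow> d = 0"
  by (metis inner_eq_zero_iff)

lemma cinner_eq_right: "(\<And>x. cinner x u = cinner x (v::'a::chilbert)) \<Longrightarrow> u = v"
proof -
  assume h: "\<And>x. cinner x u = cinner x v"
  have "inner x (u - v) = 0" for x using arg_cong[OF h[of x], of Re]
    by (simp add: cinner_Re inner_diff_right)
  then show "u = v" using inner_all_zero[of "u - v"] by simp
qed

lemma has_adj_unique: "has_adj A B \<Longrightarrow> has_adj A C \<Longrightarrow> B = C"
  unfolding has_adj_def by (intro ext cinner_eq_right) metis

lemma adj_eq: "has_adj A B \<Longrightarrow> adj A = B"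
proof -
  assume h: "has_adj A B"
  have ex: "\<exists>B. cblinear B \<and> (\<forall>x y. cinner (A x) y = cinner x (B y))"
    using h unfolding has_adj_def by blast
  have "has_adj A (adj A)" unfolding adj_def has_adj_def
    by (rule someI_ex[OF ex])
  then show ?thesis using has_adj_unique h by blast
qed

lemma cbl_linear: "cblinear A \<Longrightarrow> linear A"
  unfolding cblinear_def using bounded_linear.linear by blast
lemma cbl_add: "cblinear A \<Longrightarrow> A (x + y) = A x + A y"
  using linear_add[OF cbl_linear] .
lemma cbl_scale: "cblinear A \<Longrightarrow> A (cscale c x) = cscale c (A x)"
  unfolding cblinear_def by blast
lemma cbl_scaleR: "cblinear A \<Longrightarrow> A (r *\<^sub>R x) = r *\<^sub>R A x"
  using linear_scale[OF cbl_linear] .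
lemma cbl_zero: "cblinear A \<Longrightarrow> A 0 = 0"
  using linear_0[OF cbl_linear] .
lemma cbl_diff: "cblinear A \<Longrightarrow> A (x - y) = A x - A y"
  using linear_diff[OF cbl_linear] .
lemma cbl_minus: "cblinear A \<Longrightarrow> A (- x) = - A x"
  using linear_neg[OF cbl_linear] .
lemma cbl_sum: "cblinear A \<Longrightarrow> A (sum f S) = (\<Sum>i\<in>S. A (f i))"
  using linear_sum[OF cbl_linear] .

lemma cblinear_add: "cblinear A \<Longrightarrow> cblinear B \<Longrightarrow> cblinear (\<lambda>v. A v + B v)"
  unfolding cblinear_def by (auto intro: bounded_linear_add simp: cscale_add_right)
lemma cblinear_diff: "cblinear A \<Longrightarrow> cblinear B \<Longrightarrow> cblinear (\<lambda>v. A v - B v)"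
  unfolding cblinear_def by (auto intro: bounded_linear_sub simp: cscale_diff)
lemma cblinear_cscale: "cblinear A \<Longrightarrow> cblinear (\<lambda>v. cscale c (A v))"
  unfolding cblinear_def
  by (auto intro: bounded_linear_compose[OF bounded_linear_cscale[of c]]
      simp: cscale_comm)
lemma cblinear_id: "cblinear (\<lambda>v. v)"
  unfolding cblinear_def by (simp add: bounded_linear_ident)
lemma cblinear_zero: "cblinear (\<lambda>v. 0)"
  unfolding cblinear_def by (simp add: bounded_linear_zero)

lemma has_adj_sym: "has_adj A B \<Longrightarrow> cblinear A \<Longrightarrow> has_adj B A"
  unfolding has_adj_def by (metis cinner_commute)

lemma has_adj_add: "has_adj A A' \<Longrightarrow> has_adj B B' \<Longrightarrow> has_adj (\<lambda>v. A v + B v) (\<lambda>v. A' v + B' v)"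
  unfolding has_adj_def by (simp add: cblinear_add cinner_add_left cinner_add_right)
lemma has_adj_diff: "has_adj A A' \<Longrightarrow> has_adj B B' \<Longrightarrow> has_adj (\<lambda>v. A v - B v) (\<lambda>v. A' v - B' v)"
  unfolding has_adj_def by (simp add: cblinear_diff cinner_diff_left cinner_diff_right)
lemma has_adj_cscale: "has_adj A A' \<Longrightarrow> has_adj (\<lambda>v. cscale c (A v)) (\<lambda>v. cscale (cnj c) (A' v))"
  unfolding has_adj_def by (simp add: cblinear_cscale cinner_scale_left cinner_scale_right)
lemma has_adj_id: "has_adj (\<lambda>v. v) (\<lambda>v. v)"
  unfolding has_adj_def by (simp add: cblinear_id)
lemma has_adj_zero: "has_adj (\<lambda>v. 0) (\<lambda>v. 0)"
  unfolding has_adj_def by (simp add: cblinear_zero complex_eq_iff cinner_def)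

lemma adj_exists:
  assumes A: "cblinear (A :: 'a::chilbert \<Rightarrow> 'a)"
  shows "has_adj A (adj A)"
proof -
  interpret A: bounded_linear A using A unfolding cblinear_def by blast
  have "\<forall>y. \<exists>z. \<forall>x. inner (A x) y = inner x z"
  proof
    fix y
    have "bounded_linear (\<lambda>x. inner (A x) y)"
      using bounded_linear_compose[OF bounded_linear_inner_left A.bounded_linear_axioms]
      by (simp add: o_def)
    then show "\<exists>z. \<forall>x. inner (A x) y = inner x z" by (rule riesz)
  qed
  then obtain B where B: "\<And>x y. inner (A x) y = inner x (B y)" by metis
  have eqI: "u = v" if "\<And>x. inner x u = inner x v" for u v :: 'a
    using inner_all_zero[of "u - v"] that by (simp add: inner_diff_right)
  have Badd: "B (y1 + y2) = B y1 + B y2" for y1 y2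
    by (rule eqI) (simp add: B[symmetric] inner_add_right)
  have BscR: "B (r *\<^sub>R y) = r *\<^sub>R B y" for r y
    by (rule eqI) (simp add: B[symmetric])
  obtain KK where KK: "KK > 0" "\<And>x. norm (A x) \<le> norm x * KK" using A.pos_bounded by blast
  have Bbd: "norm (B y) \<le> norm y * KK" for y
  proof (cases "B y = 0")
    case True then show ?thesis using KK by simp
  next
    case False
    have "norm (B y) ^ 2 = inner (B y) (B y)" by (simp add: power2_norm_eq_inner)
    also have "\<dots> = inner (A (B y)) y" by (simp add: B)
    also have "\<dots> \<le> norm (A (B y)) * norm y" by (rule norm_cauchy_schwarz)
    also have "\<dots> \<le> norm (B y) * KK * norm y" using KK(2) by (simp add: mult_right_mono)
    finally have "norm (B y) * norm (B y) \<le> norm (B y) * (norm y * KK)"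
      by (simp add: power2_eq_square algebra_simps)
    then show ?thesis using False by simp
  qed
  have Bcs: "B (cscale c y) = cscale c (B y)" for c y
  proof (rule eqI)
    fix x
    have "inner x (B (cscale c y)) = inner (A x) (cscale c y)" by (simp add: B)
    also have "\<dots> = inner (cscale (cnj c) (A x)) y" by (rule inner_cscale_right)
    also have "\<dots> = inner (A (cscale (cnj c) x)) y" using A by (simp add: cbl_scale)
    also have "\<dots> = inner (cscale (cnj c) x) (B y)" by (simp add: B)
    also have "\<dots> = inner x (cscale c (B y))" by (simp add: inner_cscale_right)
    finally show "inner x (B (cscale c y)) = inner x (cscale c (B y))" .
  qed
  have "cblinear B" unfolding cblinear_def
  proof (intro conjI allI)
    show "bounded_linear B"
      by (rule bounded_linear_intro[of B KK]) (auto simp: Badd BscR Bbd)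
    show "B (cscale c x) = cscale c (B x)" for c x by (rule Bcs)
  qed
  moreover have "cinner (A x) y = cinner x (B y)" for x y
    unfolding cinner_def using A by (simp add: B cbl_scale[symmetric])
  ultimately have "has_adj A B" unfolding has_adj_def by blast
  then show ?thesis using adj_eq by metis
qed

lemma commutant_D: "X \<in> commutant S \<Longrightarrow> A \<in> S \<Longrightarrow> A (X v) = X (A v)"
  unfolding commutant_def by (metis (mono_tags, lifting) comp_apply mem_Collect_eq)

lemma commutant_cbl: "X \<in> commutant S \<Longrightarrow> cblinear X"
  unfolding commutant_def by blast

lemma commutantI: "cblinear X \<Longrightarrow> (\<And>A v. A \<in> S \<Longrightarrow> A (X v) = X (A v)) \<Longrightarrow> X \<in> commutant S"
  unfolding commutant_def by (auto simp: fun_eq_iff)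

lemma comm_swap: "W \<in> commutant S \<Longrightarrow> A \<in> S \<Longrightarrow> W (A v) = A (W v)"
  using commutant_D by metis

lemma in_bicommutant: "T \<in> S \<Longrightarrow> cblinear T \<Longrightarrow> T \<in> commutant (commutant S)"
  by (rule commutantI) (auto, metis comm_swap)

lemma commutant_triple: "X \<in> commutant S \<Longrightarrow> X \<in> commutant (commutant (commutant S))"
  by (rule commutantI) (auto simp: commutant_D commutant_cbl)

lemma vn_cbl: "von_neumann_algebra N \<Longrightarrow> A \<in> N \<Longrightarrow> cblinear A"
  unfolding von_neumann_algebra_def by blast

lemma vn_adj: "von_neumann_algebra N \<Longrightarrow> A \<in> N \<Longrightarrow> adj A \<in> N"
  unfolding von_neumann_algebra_def by blast

lemma vn_memI:
  assumes "von_neumann_algebra N" "cblinear S" "\<And>W v. W \<in> commutant N \<Longrightarrow> W (S v) = S (W v)"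
  shows "S \<in> N"
proof -
  have "S \<in> commutant (commutant N)" by (rule commutantI) (use assms in auto)
  then show ?thesis using assms(1) unfolding von_neumann_algebra_def by simp
qed

lemma vn_add: assumes "von_neumann_algebra N" "A \<in> N" "B \<in> N" shows "(\<lambda>v. A v + B v) \<in> N"
  using assms
  by (intro vn_memI) (auto simp: cblinear_add vn_cbl cbl_add commutant_cbl, metis comm_swap)

lemma vn_diff: assumes "von_neumann_algebra N" "A \<in> N" "B \<in> N" shows "(\<lambda>v. A v - B v) \<in> N"
  using assms
  by (intro vn_memI) (auto simp: cblinear_diff vn_cbl cbl_diff commutant_cbl, metis comm_swap)

lemma vn_cscale: assumes "von_neumann_algebra N" "A \<in> N" shows "(\<lambda>v. cscale c (A v)) \<in> N"
  using assms
  by (intro vn_memI) (auto simp: cblinear_cscale vn_cbl cbl_scale commutant_cbl, metis comm_swap)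

lemma vn_id: assumes "von_neumann_algebra N" shows "(\<lambda>v. v) \<in> N"
  using assms by (intro vn_memI) (auto simp: cblinear_id)

lemma vn_zero: assumes "von_neumann_algebra N" shows "(\<lambda>v. 0) \<in> N"
  using assms by (intro vn_memI) (auto simp: cblinear_zero cbl_zero commutant_cbl)

lemma vn_scal: assumes "von_neumann_algebra N" shows "(\<lambda>v. cscale c v) \<in> N"
  using vn_cscale[OF assms vn_id[OF assms]] by simp

lemma op_matrix_nth: "op_matrix A x $ i = (\<Sum>j\<in>UNIV. A i j (x $ j))"
  by (simp add: op_matrix_def)

lemma norm_vec_le_sum: "norm (x :: 'a::real_normed_vector ^ 'n) \<le> (\<Sum>i\<in>UNIV. norm (x $ i))"
  unfolding norm_vec_def by (rule L2_set_le_sum) simp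

lemma bounded_linear_vec_lambda:
  assumes "\<And>i. bounded_linear (f i)"
  shows "bounded_linear (\<lambda>x. (\<chi> i. f i x) :: 'b::real_normed_vector ^ 'n)"
proof -
  have "\<exists>K. \<forall>x. norm (f i x) \<le> norm x * K" for i
    using bounded_linear.bounded[OF assms[of i]] by blast
  then obtain K where K: "\<And>i x. norm (f i x) \<le> norm x * K i" by metis
  show ?thesis
  proof (rule bounded_linear_intro[where K="\<Sum>i\<in>UNIV. K i"])
    fix x y :: 'a and r :: real
    show "(\<chi> i. f i (x + y)) = (\<chi> i. f i x) + (\<chi> i. f i y)"
      by (simp add: vec_eq_iff linear_add[OF bounded_linear.linear[OF assms]])
    show "(\<chi> i. f i (r *\<^sub>R x)) = r *\<^sub>R (\<chi> i. f i x)"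
      by (simp add: vec_eq_iff linear_scale[OF bounded_linear.linear[OF assms]])
    have "norm (\<chi> i. f i x) \<le> (\<Sum>i\<in>UNIV. norm (f i x))"
      using norm_vec_le_sum[of "\<chi> i. f i x"] by simp
    also have "\<dots> \<le> (\<Sum>i\<in>UNIV. norm x * K i)" by (rule sum_mono) (rule K)
    finally show "norm (\<chi> i. f i x) \<le> norm x * (\<Sum>i\<in>UNIV. K i)"
      by (simp add: sum_distrib_left)
  qed
qed

lemma cblinear_op_matrix:
  fixes A :: "'n::finite \<Rightarrow> 'n \<Rightarrow> ('a::chilbert \<Rightarrow> 'a)"
  assumes "\<And>i j. cblinear (A i j)"
  shows "cblinear (op_matrix A)"
  unfolding cblinear_def
proof (intro conjI allI)
  show "bounded_linear (op_matrix A)"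
    unfolding op_matrix_def
    by (intro bounded_linear_vec_lambda bounded_linear_sum bounded_linear_compose[OF _ bounded_linear_vec_nth])
       (use assms in \<open>auto simp: cblinear_def\<close>)
  show "op_matrix A (cscale c x) = cscale c (op_matrix A x)" for c x
    by (simp add: vec_eq_iff op_matrix_def cscale_vec_def cbl_scale[OF assms] cscale_sum)
qed

lemma op_matrix_single:
  assumes "\<And>i j. cblinear (A i j)"
  shows "op_matrix A (\<chi> k. if k = j then v else 0) $ i = A i j v"
proof -
  have "(\<Sum>k\<in>UNIV. A i k ((\<chi> k. if k = j then v else 0) $ k)) = (\<Sum>k\<in>UNIV. if k = j then A i j v else 0)"
    by (rule sum.cong) (auto simp: cbl_zero[OF assms])
  then show ?thesis by (simp add: op_matrix_nth)
qed

lemma has_adj_op_matrix: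
  fixes A :: "'n::finite \<Rightarrow> 'n \<Rightarrow> ('a::chilbert \<Rightarrow> 'a)"
  assumes "\<And>i j. has_adj (A i j) (A' j i)"
  shows "has_adj (op_matrix A) (op_matrix A')"
  unfolding has_adj_def
proof (intro conjI allI)
  show "cblinear (op_matrix A')"
    by (rule cblinear_op_matrix) (metis assms has_adj_def)
  fix x y :: "'a ^ 'n"
  have "cinner (op_matrix A x) y = (\<Sum>i\<in>UNIV. \<Sum>j\<in>UNIV. cinner (A i j (x $ j)) (y $ i))"
    by (simp add: cinner_vec op_matrix_nth cinner_sum_left)
  also have "\<dots> = (\<Sum>i\<in>UNIV. \<Sum>j\<in>UNIV. cinner (x $ j) (A' j i (y $ i)))"
    using assms by (simp add: has_adj_def)
  also have "\<dots> = (\<Sum>j\<in>UNIV. \<Sum>i\<in>UNIV. cinner (x $ j) (A' j i (y $ i)))"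
    by (rule sum.swap)
  also have "\<dots> = cinner x (op_matrix A' y)"
    by (simp add: cinner_vec op_matrix_nth cinner_sum_right)
  finally show "cinner (op_matrix A x) y = cinner x (op_matrix A' y)" .
qed

lemma sum_single:
  fixes f :: "'n::finite \<Rightarrow> 'b::comm_monoid_add"
  assumes "\<And>k. k \<noteq> kk \<Longrightarrow> f k = 0"
  shows "sum f UNIV = f kk"
proof -
  have "sum f UNIV = f kk + sum f (UNIV - {kk})" by (rule sum.remove) auto
  also have "sum f (UNIV - {kk}) = 0" by (rule sum.neutral) (use assms in auto)
  finally show ?thesis by simp
qed

lemma entries_diag:
  fixes x :: "'n::finite \<Rightarrow> 'n \<Rightarrow> ('a::chilbert \<Rightarrow> 'a)" and H K :: "'a \<Rightarrow> 'a"
    and dd :: "'n \<Rightarrow> real"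
  assumes cx: "\<And>i j. cblinear (x i j)" and cH: "cblinear H" and cK: "cblinear K"
    and ab: "a \<noteq> b" and inj: "inj dd"
    and Pm_def: "Pm = (\<lambda>i j v. if i = a \<and> j = a then v else 0)"
    and Bm_def: "Bm = (\<lambda>i j v. if i = j then (if i = a then H v else if i = b then K v else dd i *\<^sub>R v)
                          else if i = b \<or> j = b then v else 0)"
    and eqP: "\<And>i j v. (\<Sum>k\<in>UNIV. x i k (Pm k j v)) = (\<Sum>k\<in>UNIV. Pm i k (x k j v))"
    and eqB: "\<And>i j v. (\<Sum>k\<in>UNIV. x i k (Bm k j v)) = (\<Sum>k\<in>UNIV. Bm i k (x k j v))"
  shows "(\<forall>i j v. x i j v = (if i = j then x a a v else 0)) \<and> (\<forall>v. x a a (H v) = H (x a a v))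
     \<and> (\<forall>v. x a a (K v) = K (x a a v))"
proof -
  note x0 = cbl_zero[OF cx] and xs = cbl_scaleR[OF cx] and H0 = cbl_zero[OF cH] and K0 = cbl_zero[OF cK]
  have z1: "x i a v = 0" if "i \<noteq> a" for i v
  proof -
    have "(\<Sum>k\<in>UNIV. x i k (Pm k a v)) = x i a v"
      by (subst sum_single[where kk=a]) (auto simp: Pm_def x0)
    moreover have "(\<Sum>k\<in>UNIV. Pm i k (x k a v)) = 0" using that by (simp add: Pm_def)
    ultimately show ?thesis using eqP[of i a v] by simp
  qed
  have z2: "x a j v = 0" if "j \<noteq> a" for j v
  proof -
    have "(\<Sum>k\<in>UNIV. x a k (Pm k j v)) = 0"
      by (rule sum.neutral) (use that in \<open>auto simp: Pm_def x0\<close>)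
    moreover have "(\<Sum>k\<in>UNIV. Pm a k (x k j v)) = x a j v"
      by (subst sum_single[where kk=a]) (auto simp: Pm_def)
    ultimately show ?thesis using eqP[of a j v] by simp
  qed
  have e1: "x b c v = 0" if "c \<noteq> a" "c \<noteq> b" for c v
  proof -
    have "(\<Sum>k\<in>UNIV. x a k (Bm k c v)) = 0"
      by (rule sum.neutral) (use that ab in \<open>auto simp: Bm_def x0 z2\<close>)
    moreover have "(\<Sum>k\<in>UNIV. Bm a k (x k c v)) = x b c v"
      by (subst sum_single[where kk=b]) (use that ab in \<open>auto simp: Bm_def z2 H0\<close>)
    ultimately show ?thesis using eqB[of a c v] by simp
  qed
  have e2: "x c b v = 0" if "c \<noteq> a" "c \<noteq> b" for c v
  proof -
    have "(\<Sum>k\<in>UNIV. x c k (Bm k a v)) = x c b v"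
      by (subst sum_single[where kk=b]) (use that ab in \<open>auto simp: Bm_def x0 z1\<close>)
    moreover have "(\<Sum>k\<in>UNIV. Bm c k (x k a v)) = 0"
      by (rule sum.neutral) (use that ab in \<open>auto simp: Bm_def z1 H0 K0\<close>)
    ultimately show ?thesis using eqB[of c a v] by simp
  qed
  have e3: "x c c' v = 0" if "c \<noteq> a" "c \<noteq> b" "c' \<noteq> a" "c' \<noteq> b" "c \<noteq> c'" for c c' v
  proof -
    have "(\<Sum>k\<in>UNIV. x c k (Bm k c' v)) = dd c' *\<^sub>R x c c' v"
      by (subst sum_single[where kk=c']) (use that ab in \<open>auto simp: Bm_def x0 xs e2\<close>)
    moreover have "(\<Sum>k\<in>UNIV. Bm c k (x k c' v)) = dd c *\<^sub>R x c c' v"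
      by (subst sum_single[where kk=c]) (use that ab in \<open>auto simp: Bm_def e1\<close>)
    ultimately have "dd c' *\<^sub>R x c c' v = dd c *\<^sub>R x c c' v" using eqB[of c c' v] by metis
    moreover have "dd c' \<noteq> dd c" using inj that(5) by (metis injD)
    ultimately show ?thesis by (simp add: scaleR_cancel_right)
  qed
  have e4: "x b b v = x a a v" for v
  proof -
    have "(\<Sum>k\<in>UNIV. x a k (Bm k b v)) = x a a v"
      by (subst sum_single[where kk=a]) (use ab in \<open>auto simp: Bm_def z2\<close>)
    moreover have "(\<Sum>k\<in>UNIV. Bm a k (x k b v)) = x b b v"
      by (subst sum_single[where kk=b]) (use ab in \<open>auto simp: Bm_def z2 H0\<close>)
    ultimately show ?thesis using eqB[of a b v] by simp
  qed
  have e5: "x c c v = x b b v" if "c \<noteq> a" "c \<noteq> b" for c v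
  proof -
    have "(\<Sum>k\<in>UNIV. x c k (Bm k b v)) = x c c v"
      by (subst sum_single[where kk=c]) (use that ab in \<open>auto simp: Bm_def z1 e2 e3, metis z1 e3\<close>)
    moreover have "(\<Sum>k\<in>UNIV. Bm c k (x k b v)) = x b b v"
      by (subst sum_single[where kk=b]) (use that ab in \<open>auto simp: Bm_def e2\<close>)
    ultimately show ?thesis using eqB[of c b v] by simp
  qed
  have e6: "x b b (K v) = K (x b b v)" for v
  proof -
    have "(\<Sum>k\<in>UNIV. x b k (Bm k b v)) = x b b (K v)"
      by (subst sum_single[where kk=b]) (use ab in \<open>auto simp: Bm_def z1 e1, metis z1 e1\<close>)
    moreover have "(\<Sum>k\<in>UNIV. Bm b k (x k b v)) = K (x b b v)"
      by (subst sum_single[where kk=b]) (use ab in \<open>auto simp: Bm_def z2 e2, metis z2 e2\<close>)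
    ultimately show ?thesis using eqB[of b b v] by simp
  qed
  have e7: "x a a (H v) = H (x a a v)" for v
  proof -
    have "(\<Sum>k\<in>UNIV. x a k (Bm k a v)) = x a a (H v)"
      by (subst sum_single[where kk=a]) (use ab in \<open>auto simp: Bm_def z2\<close>)
    moreover have "(\<Sum>k\<in>UNIV. Bm a k (x k a v)) = H (x a a v)"
      by (subst sum_single[where kk=a]) (use ab in \<open>auto simp: Bm_def z1\<close>)
    ultimately show ?thesis using eqB[of a a v] by simp
  qed
  have diag: "x i j v = (if i = j then x a a v else 0)" for i j v
  proof (cases "i = j")
    case True
    then show ?thesis
      by (cases "i = a"; cases "i = b") (auto simp: e4 e5, metis e4)
  next
    case False
    then show ?thesis
      by (cases "i = a"; cases "j = a"; cases "i = b"; cases "j = b") (auto simp: z1 z2 e1 e2 e3)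
  qed
  show ?thesis using diag e7 e6 e4 by (metis e4)
qed

lemma cscale_neg_left: "cscale (- c) (x::'a::chilbert) = - cscale c x"
proof -
  have "cscale (c + - c) x = cscale c x + cscale (- c) x" by (rule cscale_add_left)
  then have "cscale c x + cscale (- c) x = 0" by simp
  then show ?thesis by (simp add: add_eq_0_iff2)
qed

lemma cscale_neg_swap: "cscale (- c) ((x::'a::chilbert) - y) = cscale c (y - x)"
  by (simp add: cscale_neg_left cscale_diff)

lemma cscale_ii_neg: "cscale \<i> (cscale (- \<i>) (w::'a::chilbert)) = w"
  by (simp flip: cscale_mult)

lemma cscale_neg_ii: "cscale (- \<i>) (cscale \<i> (w::'a::chilbert)) = w"
  by (simp flip: cscale_mult)

lemma half_ident: "(1/2::real) *\<^sub>R ((x::'a::real_vector) + y) + (1/2::real) *\<^sub>R (x - y) = x"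
proof -
  have "(1/2::real) *\<^sub>R (x + y) + (1/2::real) *\<^sub>R (x - y) = (1/2::real) *\<^sub>R x + (1/2::real) *\<^sub>R x"
    by (simp add: algebra_simps)
  also have "\<dots> = x" by (simp flip: scaleR_add_left)
  finally show ?thesis .
qed

lemma half_ident2: "(1/2::real) *\<^sub>R ((x::'a::real_vector) + y) - (1/2::real) *\<^sub>R (x - y) = y"
proof -
  have "(1/2::real) *\<^sub>R (x + y) - (1/2::real) *\<^sub>R (x - y) = (1/2::real) *\<^sub>R y + (1/2::real) *\<^sub>R y"
    by (simp add: algebra_simps)
  also have "\<dots> = y" by (simp flip: scaleR_add_left)
  finally show ?thesis .
qed

lemma pair_eq:
  fixes u1 u2 w1 w2 :: "'a::chilbert"
  assumes "u1 + cscale \<i> w1 = u2 + cscale \<i> w2" "u1 + cscale (- \<i>) w1 = u2 + cscale (- \<i>) w2"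
  shows "u1 = u2 \<and> w1 = w2"
proof -
  have e1: "u1 - u2 = cscale \<i> (w2 - w1)" using assms(1) by (simp add: cscale_diff algebra_simps)
  have e2: "u1 - u2 = - cscale \<i> (w2 - w1)" using assms(2)
    by (simp add: cscale_diff cscale_neg_left algebra_simps)
  have zz: "- cscale \<i> (w2 - w1) = cscale \<i> (w2 - w1)" using e1 e2 by simp
  have "(2::real) *\<^sub>R cscale \<i> (w2 - w1) = 0"
    unfolding scaleR_2 by (metis zz add.right_inverse)
  then have z: "cscale \<i> (w2 - w1) = 0" by simp
  have "w2 - w1 = 0" using arg_cong[OF z, of "cscale (- \<i>)"] by (simp add: cscale_neg_ii)
  then show ?thesis using e1 z by simp
qed

lemma comm_entries:
  fixes A C :: "'n::finite \<Rightarrow> 'n \<Rightarrow> ('a::chilbert \<Rightarrow> 'a)"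
  assumes cA: "\<And>i j. cblinear (A i j)" and cC: "\<And>i j. cblinear (C i j)"
    and comm: "\<And>x. op_matrix A (op_matrix C x) = op_matrix C (op_matrix A x)"
  shows "(\<Sum>k\<in>UNIV. A i k (C k j v)) = (\<Sum>k\<in>UNIV. C i k (A k j v))"
proof -
  define e :: "'a ^ 'n" where "e = (\<chi> k. if k = j then v else 0)"
  have "op_matrix A (op_matrix C e) $ i = (\<Sum>k\<in>UNIV. A i k (op_matrix C e $ k))"
    by (rule op_matrix_nth)
  also have "\<dots> = (\<Sum>k\<in>UNIV. A i k (C k j v))"
    unfolding e_def using op_matrix_single[of C, OF cC] by simp
  finally have l: "op_matrix A (op_matrix C e) $ i = (\<Sum>k\<in>UNIV. A i k (C k j v))" .
  have "op_matrix C (op_matrix A e) $ i = (\<Sum>k\<in>UNIV. C i k (op_matrix A e $ k))"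
    by (rule op_matrix_nth)
  also have "\<dots> = (\<Sum>k\<in>UNIV. C i k (A k j v))"
    unfolding e_def using op_matrix_single[of A, OF cA] by simp
  finally have r: "op_matrix C (op_matrix A e) $ i = (\<Sum>k\<in>UNIV. C i k (A k j v))" .
  show ?thesis using l r comm[of e] by simp
qed

lemma cscale_nii_nii: "cscale (- \<i>) (cscale (- \<i>) (w::'a::chilbert)) = - w"
  by (simp add: cscale_neg_left cscale_minus cscale_ii_ii)

theorem mainTheorem8:
  fixes N :: "('a::chilbert \<Rightarrow> 'a) set"
  assumes "von_neumann_algebra N"
    and "CARD('n::finite) \<ge> 2"
    and "\<exists>T. irreducible_in N T"
  shows "\<exists>P B. P \<in> (matrix_tensor N :: ('a ^ 'n \<Rightarrow> 'a ^ 'n) set)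
           \<and> B \<in> (matrix_tensor N :: ('a ^ 'n \<Rightarrow> 'a ^ 'n) set)
           \<and> is_projection P \<and> self_adjoint B
           \<and> irreducible_in (matrix_tensor N) (\<lambda>x. P x + cscale \<i> (B x))"
proof -
  note vn = assms(1)
  obtain S where irrS: "irreducible_in N S" using assms(3) by blast
  have SN: "S \<in> N" and cenS: "commutant (Wstar S) \<inter> N = center N"
    using irrS unfolding irreducible_in_def by auto
  have cS: "cblinear S" by (rule vn_cbl[OF vn SN])
  define S' where "S' = adj S"
  have S'N: "S' \<in> N" unfolding S'_def by (rule vn_adj[OF vn SN])
  have hS: "has_adj S S'" unfolding S'_def by (rule adj_exists[OF cS])
  have hS': "has_adj S' S" by (rule has_adj_sym[OF hS cS])
  define H where "H = (\<lambda>v. cscale (complex_of_real (1/2)) (S v + S' v))"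
  define K where "K = (\<lambda>v. cscale (complex_of_real (1/2)) (cscale (- \<i>) (S v - S' v)))"
  have HN: "H \<in> N" unfolding H_def by (rule vn_cscale[OF vn vn_add[OF vn SN S'N]])
  have KN: "K \<in> N" unfolding K_def by (rule vn_cscale[OF vn vn_cscale[OF vn vn_diff[OF vn SN S'N]]])
  have cH: "cblinear H" by (rule vn_cbl[OF vn HN])
  have cK: "cblinear K" by (rule vn_cbl[OF vn KN])
  have hH: "has_adj H H"
  proof -
    have "has_adj H (\<lambda>v. cscale (cnj (complex_of_real (1/2))) (S' v + S v))"
      unfolding H_def by (rule has_adj_cscale[OF has_adj_add[OF hS hS']])
    then show ?thesis unfolding H_def by (simp add: add.commute)
  qed
  have hK: "has_adj K K"
  proof -
    have "has_adj K (\<lambda>v. cscale (cnj (complex_of_real (1/2))) (cscale (cnj (- \<i>)) (S' v - S v)))"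
      unfolding K_def by (rule has_adj_cscale[OF has_adj_cscale[OF has_adj_diff[OF hS hS']]])
    moreover have "(\<lambda>v. cscale (cnj (complex_of_real (1/2))) (cscale (cnj (- \<i>)) (S' v - S v))) = K"
      unfolding K_def by (simp add: cscale_neg_swap)
    ultimately show ?thesis by simp
  qed
  have Sid: "S v = H v + cscale \<i> (K v)" for v
  proof -
    have "H v + cscale \<i> (K v) = (1/2::real) *\<^sub>R (S v + S' v) + (1/2::real) *\<^sub>R (S v - S' v)"
      unfolding H_def K_def by (simp only: cscale_of_real cscale_scaleR cscale_ii_neg)
    then show ?thesis by (simp add: half_ident)
  qed
  have S'id: "S' v = H v + cscale (- \<i>) (K v)" for v
  proof -
    have "H v + cscale (- \<i>) (K v) = (1/2::real) *\<^sub>R (S v + S' v) - (1/2::real) *\<^sub>R (S v - S' v)"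
      unfolding H_def K_def cscale_of_real cscale_scaleR cscale_nii_nii by (simp add: algebra_simps)
    then show ?thesis by (simp add: half_ident2)
  qed

  obtain a b :: 'n where ab: "a \<noteq> b"
  proof -
    have "\<not> (\<forall>a b::'n. a = b)"
    proof
      assume all: "\<forall>a b::'n. a = b"
      then have "(UNIV::'n set) = {undefined}" by auto
      then have "CARD('n) = card {undefined::'n}" by (rule arg_cong[where f=card])
      then have "CARD('n) = 1" by simp
      then show False using assms(2) by simp
    qed
    then show ?thesis using that by blast
  qed
  obtain f :: "'n \<Rightarrow> nat" where inj_f: "inj f"
    using finite_imp_inj_to_nat_seg[of "UNIV::'n set"] by auto
  define dd where "dd = (\<lambda>i. real (f i))"
  have inj: "inj dd" unfolding dd_def using inj_f by (simp add: inj_def)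

  define Pm :: "'n \<Rightarrow> 'n \<Rightarrow> 'a \<Rightarrow> 'a" where "Pm = (\<lambda>i j v. if i = a \<and> j = a then v else 0)"
  define Bm :: "'n \<Rightarrow> 'n \<Rightarrow> 'a \<Rightarrow> 'a" where
    "Bm = (\<lambda>i j v. if i = j then (if i = a then H v else if i = b then K v else dd i *\<^sub>R v)
                          else if i = b \<or> j = b then v else 0)"
  have Pm_eq: "Pm i j = (if i = a \<and> j = a then (\<lambda>v. v) else (\<lambda>v. 0))" for i j
    by (cases "i = a \<and> j = a") (auto simp: Pm_def fun_eq_iff)
  have Bm_eq: "Bm i j = (if i = j then (if i = a then H else if i = b then K
                   else (\<lambda>v. cscale (complex_of_real (dd i)) v))
                 else if i = b \<or> j = b then (\<lambda>v. v) else (\<lambda>v. 0))" for i j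
    by (auto simp: Bm_def fun_eq_iff cscale_of_real)
  have hscal: "has_adj (\<lambda>v. cscale (complex_of_real r) v) (\<lambda>v. cscale (complex_of_real r) v)" for r
    using has_adj_cscale[OF has_adj_id, of "complex_of_real r"] by simp
  have PmN: "Pm i j \<in> N" for i j
    by (simp add: Pm_eq vn_id[OF vn] vn_zero[OF vn])
  have BmN: "Bm i j \<in> N" for i j
    by (simp add: Bm_eq HN KN vn_scal[OF vn] vn_id[OF vn] vn_zero[OF vn])
  have cPm: "cblinear (Pm i j)" for i j by (rule vn_cbl[OF vn PmN])
  have cBm: "cblinear (Bm i j)" for i j by (rule vn_cbl[OF vn BmN])
  have hPm: "has_adj (Pm i j) (Pm j i)" for i j
    by (auto simp: Pm_eq has_adj_id has_adj_zero)
  have hBm: "has_adj (Bm i j) (Bm j i)" for i j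
    by (auto simp: Bm_eq hH hK has_adj_id has_adj_zero hscal)

  define P :: "'a ^ 'n \<Rightarrow> 'a ^ 'n" where "P = op_matrix Pm"
  define B :: "'a ^ 'n \<Rightarrow> 'a ^ 'n" where "B = op_matrix Bm"
  let ?M = "matrix_tensor N :: ('a ^ 'n \<Rightarrow> 'a ^ 'n) set"
  have PM: "P \<in> ?M" unfolding P_def matrix_tensor_def using PmN by blast
  have BM: "B \<in> ?M" unfolding B_def matrix_tensor_def using BmN by blast
  have hP: "has_adj P P" unfolding P_def by (rule has_adj_op_matrix) (rule hPm)
  have hB: "has_adj B B" unfolding B_def by (rule has_adj_op_matrix) (rule hBm)
  have cP: "cblinear P" using hP by (simp add: has_adj_def)
  have cB: "cblinear B" using hB by (simp add: has_adj_def)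
  have Pnth: "P x $ i = (if i = a then x $ a else 0)" for x i
    unfolding P_def op_matrix_nth by (subst sum_single[where kk=a]) (auto simp: Pm_def)
  have projP: "is_projection P"
    unfolding is_projection_def
  proof (intro conjI)
    show "cblinear P" by (rule cP)
    show "P \<circ> P = P" by (rule ext) (simp add: vec_eq_iff Pnth)
    show "adj P = P" by (rule adj_eq[OF hP])
  qed
  have saB: "self_adjoint B" unfolding self_adjoint_def using cB adj_eq[OF hB] by blast

  define T where "T = (\<lambda>x. P x + cscale \<i> (B x))"
  define T' where "T' = (\<lambda>x. P x + cscale (- \<i>) (B x))"
  have opm_lin: "(\<lambda>x. P x + cscale c (B x)) = op_matrix (\<lambda>i j v. Pm i j v + cscale c (Bm i j v))" for c
    by (simp add: fun_eq_iff vec_eq_iff P_def B_def op_matrix_nth cscale_vec_def sum.distrib cscale_sum)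
  have lin_in: "(\<lambda>x. P x + cscale c (B x)) \<in> ?M" for c
  proof -
    have "\<forall>i j. (\<lambda>v. Pm i j v + cscale c (Bm i j v)) \<in> N"
      using vn_add[OF vn PmN vn_cscale[OF vn BmN]] by blast
    then show ?thesis unfolding opm_lin matrix_tensor_def by blast
  qed
  have TM: "T \<in> ?M" unfolding T_def by (rule lin_in)
  have T'M: "T' \<in> ?M" unfolding T'_def by (rule lin_in)
  have hT: "has_adj T T'"
    using has_adj_add[OF hP has_adj_cscale[OF hB, of \<i>]] by (simp add: T_def T'_def)
  have adjT: "adj T = T'" by (rule adj_eq[OF hT])
  have cT: "cblinear T" unfolding T_def by (intro cblinear_add cP cblinear_cscale cB)
  have cT': "cblinear T'" unfolding T'_def by (intro cblinear_add cP cblinear_cscale cB)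
  have WT: "Wstar T = commutant (commutant {T, T'})" by (simp add: Wstar_def adjT)

  have "commutant (Wstar T) \<inter> ?M = center ?M"
  proof (intro equalityI subsetI)
    fix X assume X: "X \<in> commutant (Wstar T) \<inter> ?M"
    then have XW: "X \<in> commutant (commutant (commutant {T, T'}))" and XM: "X \<in> ?M"
      by (auto simp: WT)
    have TW: "T \<in> commutant (commutant {T, T'})" by (rule in_bicommutant) (auto simp: cT)
    have T'W: "T' \<in> commutant (commutant {T, T'})" by (rule in_bicommutant) (auto simp: cT')
    have cX: "cblinear X" by (rule commutant_cbl[OF XW])
    have XPB: "X (P v) = P (X v) \<and> X (B v) = B (X v)" for v
    proof (rule pair_eq)
      show "X (P v) + cscale \<i> (X (B v)) = P (X v) + cscale \<i> (B (X v))"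
        using comm_swap[OF XW TW, of v] by (simp add: T_def cbl_add[OF cX] cbl_scale[OF cX])
      show "X (P v) + cscale (- \<i>) (X (B v)) = P (X v) + cscale (- \<i>) (B (X v))"
        using comm_swap[OF XW T'W, of v] by (simp add: T'_def cbl_add[OF cX] cbl_scale[OF cX])
    qed
    obtain Xm where XmN: "\<And>i j. Xm i j \<in> N" and Xeq: "X = op_matrix Xm"
      using XM unfolding matrix_tensor_def by blast
    have cXm: "cblinear (Xm i j)" for i j by (rule vn_cbl[OF vn XmN])
    have eqP: "(\<Sum>k\<in>UNIV. Xm i k (Pm k j v)) = (\<Sum>k\<in>UNIV. Pm i k (Xm k j v))" for i j v
      by (rule comm_entries[of Xm Pm, OF cXm cPm]) (use XPB in \<open>simp add: Xeq P_def\<close>)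
    have eqB: "(\<Sum>k\<in>UNIV. Xm i k (Bm k j v)) = (\<Sum>k\<in>UNIV. Bm i k (Xm k j v))" for i j v
      by (rule comm_entries[of Xm Bm, OF cXm cBm]) (use XPB in \<open>simp add: Xeq B_def\<close>)
    have diag: "(\<forall>i j v. Xm i j v = (if i = j then Xm a a v else 0)) \<and> (\<forall>v. Xm a a (H v) = H (Xm a a v))
     \<and> (\<forall>v. Xm a a (K v) = K (Xm a a v))"
      by (rule entries_diag[OF cXm cH cK ab inj Pm_def Bm_def eqP eqB])
    define p where "p = Xm a a"
    have pN: "p \<in> N" unfolding p_def by (rule XmN)
    have cp: "cblinear p" by (rule vn_cbl[OF vn pN])
    have dg: "Xm i j v = (if i = j then p v else 0)" for i j v using diag unfolding p_def by blast
    have pH: "p (H v) = H (p v)" for v using diag unfolding p_def by blast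
    have pK: "p (K v) = K (p v)" for v using diag unfolding p_def by blast
    have pS: "p (S v) = S (p v)" for v
      by (simp add: Sid cbl_add[OF cp] cbl_scale[OF cp] pH pK)
    have pS': "p (S' v) = S' (p v)" for v
      by (simp add: S'id cbl_add[OF cp] cbl_scale[OF cp] pH pK)
    have "p \<in> commutant {S, adj S}"
      by (rule commutantI[OF cp]) (auto simp: pS pS' S'_def[symmetric])
    then have "p \<in> commutant (Wstar S)" unfolding Wstar_def by (rule commutant_triple)
    then have "p \<in> center N" using cenS pN by blast
    then have pC: "p \<in> commutant N" unfolding center_def by blast
    have Xv: "X w = (\<chi> j. p (w $ j))" for w
    proof -
      have "X w $ j = p (w $ j)" for j
        unfolding Xeq op_matrix_nth
        by (subst sum_single[where kk=j]) (auto simp: dg)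
      then show ?thesis by (simp add: vec_eq_iff)
    qed
    have "X \<in> commutant ?M"
    proof (rule commutantI[OF cX])
      fix A v assume "A \<in> ?M"
      then obtain Am where AmN: "\<And>i j. Am i j \<in> N" and Aeq: "A = op_matrix Am"
        unfolding matrix_tensor_def by blast
      have "A (X v) $ i = X (A v) $ i" for i
      proof -
        have "A (X v) $ i = (\<Sum>j\<in>UNIV. Am i j (p (v $ j)))" by (simp add: Aeq Xv op_matrix_nth)
        also have "\<dots> = (\<Sum>j\<in>UNIV. p (Am i j (v $ j)))"
          by (rule sum.cong) (auto simp: comm_swap[OF pC AmN])
        also have "\<dots> = X (A v) $ i" by (simp add: Aeq Xv op_matrix_nth cbl_sum[OF cp])
        finally show ?thesis .
      qed
      then show "A (X v) = X (A v)" by (simp add: vec_eq_iff)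
    qed
    then show "X \<in> center ?M" unfolding center_def using XM by blast
  next
    fix Z assume "Z \<in> center ?M"
    then have ZM: "Z \<in> ?M" and ZC: "Z \<in> commutant ?M" unfolding center_def by auto
    have cZ: "cblinear Z" by (rule commutant_cbl[OF ZC])
    have "Z \<in> commutant {T, T'}"
    proof (rule commutantI[OF cZ])
      fix A v assume "A \<in> {T, T'}"
      then have "A \<in> ?M" using TM T'M by blast
      then show "A (Z v) = Z (A v)" using comm_swap[OF ZC] by metis
    qed
    then have "Z \<in> commutant (Wstar T)" unfolding WT by (rule commutant_triple)
    then show "Z \<in> commutant (Wstar T) \<inter> ?M" using ZM by blast
  qed
  then have "irreducible_in ?M T" unfolding irreducible_in_def using TM by blast
  then show ?thesis using PM BM projP saB unfolding T_def by blast
qed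

end
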